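(* Let $s\ge2$ be an integer and $\psi_s(z):=z^{s-1}(z+s)-(s-1)^{s-1}$. Every complex root $\alpha$ of $\psi_s$ other than its unique negative real root satisfies $|\alpha|<s-1$.
   Context: The negative real root of $\psi_s$ is unique: it is $1-s$ when $s$ is odd and lies in $(-s-1,1-s)$ when $s$ is even. *)

theory Defs
  imports "HOL-Analysis.Analysis"
begin

definition psi :: "nat \<Rightarrow> complex \<Rightarrow> complex" where
  "psi s z = z ^ (s - 1) * (z + of_nat s) - (of_nat s - 1) ^ (s - 1)"

definition neg_root :: "nat \<Rightarrow> real" where
  "neg_root s = (THE r. r < 0 \<and> psi s (complex_of_real r) = 0)"

end

theory Submission
  imports Defs
begin

lemma im_pow_bound:
  fixes z :: complex
  shows "\<bar>Im (z ^ Suc k)\<bar> \<le> real (Suc k) * cmod z ^ k * \<bar>Im z\<bar>"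
proof (induction k)
  case 0
  then show ?case by simp
next
  case (Suc k)
  have e: "Im (z ^ Suc (Suc k)) = Re z * Im (z ^ Suc k) + Im z * Re (z ^ Suc k)"
    by (simp add: power_Suc[of z "Suc k"])
  have "\<bar>Re z * Im (z ^ Suc k)\<bar> \<le> cmod z * (real (Suc k) * cmod z ^ k * \<bar>Im z\<bar>)"
    unfolding abs_mult by (rule mult_mono[OF abs_Re_le_cmod Suc.IH]) auto
  moreover have "\<bar>Im z * Re (z ^ Suc k)\<bar> \<le> \<bar>Im z\<bar> * cmod z ^ Suc k"
    unfolding abs_mult by (metis abs_Re_le_cmod abs_ge_zero mult_left_mono norm_power)
  ultimately have "\<bar>Im (z ^ Suc (Suc k))\<bar> \<le> cmod z * (real (Suc k) * cmod z ^ k * \<bar>Im z\<bar>) + \<bar>Im z\<bar> * cmod z ^ Suc k"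
    unfolding e by (rule order_trans[OF abs_triangle_ineq add_mono])
  also have "\<dots> = real (Suc (Suc k)) * cmod z ^ Suc k * \<bar>Im z\<bar>"
    by (simp add: algebra_simps)
  finally show ?case .
qed

definition hh :: "nat \<Rightarrow> real \<Rightarrow> real" where
  "hh n t = t ^ n * (real n + 1 - t)"

lemma hh_deriv:
  assumes "n \<ge> 1"
  shows "DERIV (hh n) x :> (real n + 1) * x ^ (n - 1) * (real n - x)"
proof -
  have "DERIV (hh n) x :> real n * x ^ (n - 1) * (real n + 1 - x) + x ^ n * (- 1)"
    unfolding hh_def by (auto intro!: derivative_eq_intros)
  moreover have "x ^ n = x * x ^ (n - 1)" using assms
    by (metis Suc_diff_le diff_Suc_1 power_Suc)
  ultimately show ?thesis by (simp add: algebra_simps)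
qed

lemma hh_cont: "continuous_on A (hh n)"
  unfolding hh_def by (intro continuous_intros)

lemma hh_inc:
  assumes "n \<ge> 1" "0 \<le> a" "a < b" "b \<le> real n"
  shows "hh n a < hh n b"
proof (rule DERIV_pos_imp_increasing_open[OF assms(3) _ hh_cont])
  fix x assume "a < x" "x < b"
  then have "(real n + 1) * x ^ (n - 1) * (real n - x) > 0"
    using assms by (intro mult_pos_pos) auto
  then show "\<exists>y. DERIV (hh n) x :> y \<and> y > 0"
    using hh_deriv[OF assms(1), of x] by blast
qed

lemma hh_dec:
  assumes "n \<ge> 1" "real n \<le> a" "a < b"
  shows "hh n a > hh n b"
proof (rule DERIV_neg_imp_decreasing_open[OF assms(3) _ hh_cont])
  fix x assume "a < x" "x < b"
  then have "(real n + 1) * x ^ (n - 1) * (real n - x) < 0"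
    using assms by (intro mult_pos_neg) auto
  then show "\<exists>y. DERIV (hh n) x :> y \<and> y < 0"
    using hh_deriv[OF assms(1), of x] by blast
qed

lemma hh_max:
  assumes "n \<ge> 1" "0 \<le> t" "hh n t = real n ^ n"
  shows "t = real n"
proof -
  have hn: "hh n (real n) = real n ^ n" by (simp add: hh_def)
  show ?thesis
  proof (cases t "real n" rule: linorder_cases)
    case less then show ?thesis using hh_inc[OF assms(1) assms(2) less] hn assms by simp
  next
    case greater then show ?thesis using hh_dec[OF assms(1) _ greater] hn assms by simp
  qed simp
qed

lemma neg_root_real_eq:
  assumes "n \<ge> 1" "x < 0" "x ^ n * (x + real n + 1) = real n ^ n"
  shows "hh n (-x) = (-1) ^ n * real n ^ n"
proof -
  have "hh n (-x) = (-x) ^ n * (x + real n + 1)" by (simp add: hh_def)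
  also have "\<dots> = (-1) ^ n * (x ^ n * (x + real n + 1))" by (simp add: power_minus[of x])
  also have "\<dots> = (-1) ^ n * real n ^ n" using assms(3) by simp
  finally show ?thesis .
qed

lemma neg_root_unique:
  assumes "n \<ge> 1" "x < 0" "x ^ n * (x + real n + 1) = real n ^ n"
    "y < 0" "y ^ n * (y + real n + 1) = real n ^ n"
  shows "x = y"
proof (cases "even n")
  case True
  then have "hh n (-x) = real n ^ n" "hh n (-y) = real n ^ n"
    using neg_root_real_eq[OF assms(1,2,3)] neg_root_real_eq[OF assms(1,4,5)] by simp_all
  then show ?thesis using hh_max[OF assms(1)] assms by (metis neg_0_le_iff_le less_imp_le minus_equation_iff)
next
  case False
  then have hx: "hh n (-x) = - (real n ^ n)" and hy: "hh n (-y) = - (real n ^ n)"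
    using neg_root_real_eq[OF assms(1,2,3)] neg_root_real_eq[OF assms(1,4,5)] by simp_all
  have big: "t > real n + 1" if "t > 0" "hh n t = - (real n ^ n)" for t
  proof (rule ccontr)
    assume "\<not> ?thesis"
    then have "hh n t \<ge> 0" unfolding hh_def by (intro mult_nonneg_nonneg) (use that in auto)
    moreover have "real n ^ n > 0" using assms by simp
    ultimately show False using that by simp
  qed
  have xb: "-x > real n + 1" using big hx assms by simp
  have yb: "-y > real n + 1" using big hy assms by simp
  show ?thesis
  proof (cases "-x" "-y" rule: linorder_cases)
    case less then show ?thesis using hh_dec[OF assms(1) _ less] xb hx hy by simp
  next
    case greater then show ?thesis using hh_dec[OF assms(1) _ greater] yb hx hy by simp
  qed simp
qed


lemma key_im:
  fixes z :: complex
  assumes n1: "n \<ge> 1" and eq: "z ^ n * (z + of_nat n + 1) = of_nat n ^ n"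
    and big: "cmod z \<ge> real n"
  shows "Im z = 0"
proof (rule ccontr)
  assume nz: "Im z \<noteq> 0"
  define w where "w = z + of_nat n + 1"
  define r where "r = cmod z"
  have "real n \<ge> 1" using n1 by simp
  then have rpos: "r > 0" using big r_def by linarith
  have wz: "w * z ^ n = of_nat n ^ n" using eq w_def by (simp add: mult.commute)
  have A1: "w * (z ^ n * cnj (z ^ n)) = of_nat n ^ n * cnj (z ^ n)"
    using wz by (metis mult.assoc)
  have B1: "z ^ n * cnj (z ^ n) = complex_of_real ((cmod (z ^ n))\<^sup>2)"
    by (rule complex_norm_square[symmetric])
  have "w * complex_of_real ((cmod (z ^ n))\<^sup>2) = of_nat n ^ n * cnj (z ^ n)"
    using A1 by (simp only: B1)
  then have "Im (w * complex_of_real ((cmod (z ^ n))\<^sup>2)) = Im (of_nat n ^ n * cnj (z ^ n))"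
    by simp
  then have "Im w * (cmod (z ^ n))\<^sup>2 = - (real n ^ n * Im (z ^ n))"
    by (simp add: Im_complex_of_real del: complex_cnj_power)
  moreover have "Im w = Im z" using w_def by simp
  ultimately have A: "Im z * r ^ (2 * n) = - (real n ^ n * Im (z ^ n))"
    by (simp add: r_def norm_power power_mult[symmetric] mult.commute)
  have B: "\<bar>Im (z ^ n)\<bar> \<le> real n * r ^ (n - 1) * \<bar>Im z\<bar>"
    using im_pow_bound[of z "n - 1"] n1 r_def by simp
  have "\<bar>Im z\<bar> * r ^ (2 * n) = real n ^ n * \<bar>Im (z ^ n)\<bar>"
    using arg_cong[OF A, of abs] by (simp add: abs_mult)
  also have "\<dots> \<le> real n ^ n * (real n * r ^ (n - 1) * \<bar>Im z\<bar>)"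
    using B by (intro mult_left_mono) auto
  finally have C: "\<bar>Im z\<bar> * r ^ (2 * n) \<le> \<bar>Im z\<bar> * (real n ^ (n + 1) * r ^ (n - 1))"
    by (simp add: algebra_simps)
  have "r ^ (2 * n) \<le> real n ^ (n + 1) * r ^ (n - 1)"
    using C nz by simp
  moreover have "n + 1 + (n - 1) = 2 * n" using n1 by simp
  then have "r ^ (2 * n) = r ^ (n + 1) * r ^ (n - 1)"
    by (metis power_add)
  ultimately have "r ^ (n + 1) \<le> real n ^ (n + 1)"
    using rpos by simp
  then have "r ^ Suc n \<le> real n ^ Suc n" by simp
  then have "r \<le> real n" by (rule power_le_imp_le_base) simp
  then have rn: "r = real n" using big r_def by simp
  have "cmod w * r ^ n = real n ^ n"
    using arg_cong[OF wz, of cmod] by (simp add: norm_mult norm_power r_def)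
  then have "cmod w = 1" using rn n1 by simp
  then have w1: "(Re z + real n + 1)\<^sup>2 + (Im z)\<^sup>2 = 1"
    using w_def cmod_power2[of w] by simp
  have z1: "(Re z)\<^sup>2 + (Im z)\<^sup>2 = (real n)\<^sup>2"
    using rn r_def cmod_power2[of z] by simp
  have "(Re z + real n + 1)\<^sup>2 - (Re z)\<^sup>2 = 1 - (real n)\<^sup>2"
    using w1 z1 by simp
  then have "2 * (real n + 1) * (Re z + real n) = 0"
    by (simp add: power2_eq_square algebra_simps)
  then have "Re z = - real n" by simp
  then have "(Im z)\<^sup>2 = 0" using z1 by simp
  then show False using nz by simp
qed

theorem mainTheorem15:
  fixes s :: nat and \<alpha> :: complex
  assumes "s \<ge> 2"
    and "psi s \<alpha> = 0"
    and "\<alpha> \<noteq> complex_of_real (neg_root s)"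
  shows "cmod \<alpha> < real s - 1"
proof (rule ccontr)
  assume nb: "\<not> cmod \<alpha> < real s - 1"
  obtain n where sn: "s = Suc n" and n1: "n \<ge> 1" using assms(1)
    by (metis Suc_le_D Suc_le_mono one_add_one plus_1_eq_Suc)
  have psi_eq: "psi s z = 0 \<longleftrightarrow> z ^ n * (z + of_nat n + 1) = of_nat n ^ n" for z
    unfolding psi_def sn by (simp add: add_ac)
  have eq: "\<alpha> ^ n * (\<alpha> + of_nat n + 1) = of_nat n ^ n" using assms(2) psi_eq by simp
  have big: "cmod \<alpha> \<ge> real n" using nb sn by simp
  have im0: "Im \<alpha> = 0" by (rule key_im[OF n1 eq big])
  define x where "x = Re \<alpha>"
  have ax: "\<alpha> = complex_of_real x" using im0 x_def by (simp add: complex_eq_iff)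
  have real_eq: "psi s (complex_of_real r) = 0 \<longleftrightarrow> r ^ n * (r + real n + 1) = real n ^ n" for r
  proof -
    have "complex_of_real r ^ n * (complex_of_real r + of_nat n + 1) = complex_of_real (r ^ n * (r + real n + 1))"
      by simp
    moreover have "(of_nat n :: complex) ^ n = complex_of_real (real n ^ n)" by simp
    ultimately show ?thesis unfolding psi_eq by (metis of_real_eq_iff)
  qed
  have xeq: "x ^ n * (x + real n + 1) = real n ^ n" using real_eq assms(2) ax by simp
  have xabs: "\<bar>x\<bar> \<ge> real n" using big ax by simp
  have xneg: "x < 0"
  proof (rule ccontr)
    assume "\<not> x < 0"
    then have xn: "x \<ge> real n" using xabs by simp
    have "real n ^ n \<le> x ^ n" using xn by (intro power_mono) auto
    moreover have "x + real n + 1 > 1" using xn n1 by simp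
    moreover have "real n ^ n > 0" using n1 by simp
    moreover have "real n \<ge> 1" using n1 by simp
    then have "x ^ n > 0" using xn by simp
    ultimately have "x ^ n * (x + real n + 1) > x ^ n * 1"
      by (intro mult_strict_left_mono) auto
    then have "x ^ n * (x + real n + 1) > real n ^ n"
      using \<open>real n ^ n \<le> x ^ n\<close> by simp
    then show False using xeq by simp
  qed
  have "neg_root s = x"
    unfolding neg_root_def
  proof (rule the_equality)
    show "x < 0 \<and> psi s (complex_of_real x) = 0" using xneg assms(2) ax by simp
  next
    fix r assume r: "r < 0 \<and> psi s (complex_of_real r) = 0"
    then have "r ^ n * (r + real n + 1) = real n ^ n" using real_eq by simp
    then show "r = x" using neg_root_unique[OF n1 _ _ xneg xeq] r by simp
  qed
  then show False using assms(3) ax by simp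
qed

end
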